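(* Let $\mathcal{H}$, $C$, $T$, $f_1$, $f_2$, $f$ be as in the context, satisfying (A1), (A2), (A3), assume $\Omega\neq\emptyset$, and let $\{x^k\}$ be generated by the Algorithm. Then for every $x^*\in\Omega$ the sequence of real numbers $\{\|x^k-x^*\|\}_{k\in\mathbb{N}}$ is convergent.
   Context: $\mathcal{H}$ is a real Hilbert space with inner product $\langle\cdot,\cdot\rangle$ and norm $\|\cdot\|$; $C\subseteq\mathcal{H}$ is nonempty, closed and convex; $T:C\to C$ is nonexpansive ($\|T(x)-T(y)\|\le\|x-y\|$ for all $x,y\in C$), with fixed point set $Fix(T)$. $f_1,f_2:\mathcal{H}\times\mathcal{H}\to\mathbb{R}$, $f=f_1+f_2$, and $f_i(x,x)=0$ for all $x\in C$, $i=1,2$. $\partial_2 f_i(x,y)$ denotes the subdifferential of the convex function $f_i(x,\cdot)$ at $y$. Assumptions: (A1) for each $x\in C$, $f_1(x,\cdot)$ and $f_2(x,\cdot)$ are convex and subdifferentiable on an open set containing $C$, and $f(\cdot,x)$ is weakly upper semicontinuous on $C$. (A2) $f$ is pseudo-monotone on $C$: for all $x,y\in C$, $f(x,y)\ge0\Rightarrow f(y,x)\le 0$. (A3) either $\operatorname{int}C\neq\emptyset$, or for every $x\in C$ each $f_i(x,\cdot)$ is continuous at some point of $C$. $Sol(C,f)=\{x\in C: f(x,y)\ge 0\ \forall y\in C\}$; $\Omega=Sol(C,f)\cap Fix(T)$. Algorithm: choose $x^0\in C$, $\gamma\in(0,1)$ and real numbers $\beta_k>0$ ($k\ge0$) with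 $\sum_k\beta_k=+\infty$, $\sum_k\beta_k^2<+\infty$. For $k=0,1,\dots$: take $g_1^k\in\partial_2 f_1(x^k,x^k)$, $g_2^k\in\partial_2 f_2(x^k,x^k)$; set $\eta_k=\max\{\beta_k,\|g_1^k\|,\|g_2^k\|\}$, $\lambda_k=\beta_k/\eta_k$; $y^k=\arg\min\{\lambda_k f_1(x^k,y)+\tfrac12\|y-x^k\|^2 : y\in C\}$, $z^k=\arg\min\{\lambda_k f_2(x^k,y)+\tfrac12\|y-y^k\|^2 : y\in C\}$, $x^{k+1}=\gamma z^k+(1-\gamma)T(x^k)$. *)

theory Defs
  imports "HOL-Analysis.Analysis"
begin

text \<open>Real Hilbert space: type class real_inner + complete_space.\<close>

definition subdifferential :: "('a::real_inner \<Rightarrow> real) \<Rightarrow> 'a \<Rightarrow> 'a set" where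
  "subdifferential g y = {w. \<forall>u. g u \<ge> g y + inner w (u - y)}"

definition nonexpansive_on :: "'a::real_normed_vector set \<Rightarrow> ('a \<Rightarrow> 'a) \<Rightarrow> bool" where
  "nonexpansive_on C T \<longleftrightarrow> (\<forall>x\<in>C. \<forall>y\<in>C. norm (T x - T y) \<le> norm (x - y))"

definition weakly_converges :: "(nat \<Rightarrow> 'a::real_inner) \<Rightarrow> 'a \<Rightarrow> bool" where
  "weakly_converges u v \<longleftrightarrow> (\<forall>w. (\<lambda>n. inner (u n) w) \<longlonglongrightarrow> inner v w)"

definition weakly_usc_on :: "'a::real_inner set \<Rightarrow> ('a \<Rightarrow> real) \<Rightarrow> bool" where
  "weakly_usc_on C h \<longleftrightarrow>
     (\<forall>u v. (\<forall>n. u n \<in> C) \<longrightarrow> v \<in> C \<longrightarrow> weakly_converges u v \<longrightarrow>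
        (\<forall>e>0. \<forall>\<^sub>F n in sequentially. h (u n) < h v + e))"

definition pseudo_monotone_on :: "'a set \<Rightarrow> ('a \<Rightarrow> 'a \<Rightarrow> real) \<Rightarrow> bool" where
  "pseudo_monotone_on C f \<longleftrightarrow> (\<forall>x\<in>C. \<forall>y\<in>C. f x y \<ge> 0 \<longrightarrow> f y x \<le> 0)"

definition Sol :: "'a set \<Rightarrow> ('a \<Rightarrow> 'a \<Rightarrow> real) \<Rightarrow> 'a set" where
  "Sol C f = {x\<in>C. \<forall>y\<in>C. f x y \<ge> 0}"

definition Fix :: "('a \<Rightarrow> 'a) \<Rightarrow> 'a set" where
  "Fix T = {x. T x = x}"

definition is_minimizer_on :: "('a \<Rightarrow> real) \<Rightarrow> 'a set \<Rightarrow> 'a \<Rightarrow> bool" where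
  "is_minimizer_on h C y \<longleftrightarrow> y \<in> C \<and> (\<forall>u\<in>C. h y \<le> h u)"

end

theory Submission
  imports Defs
begin

lemma sq_expand:
  fixes p q :: "'a::real_inner"
  shows "(norm (p + q))\<^sup>2 = (norm p)\<^sup>2 + 2 * inner p q + (norm q)\<^sup>2"
  by (simp add: power2_norm_eq_inner inner_add inner_commute algebra_simps)

lemma nonneg_from_small:
  fixes Q c :: real
  assumes c: "c \<ge> 0" and h: "\<And>t. 0 < t \<Longrightarrow> t \<le> 1 \<Longrightarrow> Q + t * c \<ge> 0"
  shows "Q \<ge> 0"
proof (rule ccontr)
  assume "\<not> Q \<ge> 0" hence Q: "Q < 0" by simp
  show False
  proof (cases "c = 0")
    case True then show False using h[of 1] Q by simp
  next
    case False
    hence cp: "c > 0" using c by simp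
    define t where "t = min 1 (-Q/(2*c))"
    have t0: "t > 0" using Q cp by (simp add: t_def divide_neg_pos)
    have t1: "t \<le> 1" by (simp add: t_def)
    have "t * c \<le> (-Q/(2*c)) * c" using cp by (intro mult_right_mono) (auto simp: t_def)
    also have "\<dots> = -Q/2" using cp by simp
    finally show False using h[OF t0 t1] Q by simp
  qed
qed

lemma prox_ineq:
  fixes C :: "'a::real_inner set"
  assumes cvx: "convex_on C h"
    and mini: "is_minimizer_on (\<lambda>v. lam * h v + (1/2) * (norm (v - a))\<^sup>2) C y"
    and lam: "lam \<ge> 0" and u: "u \<in> C"
  shows "(norm (u - y))\<^sup>2 \<le> (norm (u - a))\<^sup>2 - (norm (y - a))\<^sup>2 + 2 * lam * (h u - h y)"
proof -
  have yC: "y \<in> C" using mini by (simp add: is_minimizer_on_def)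
  have key: "lam * (h u - h y) + inner (y - a) (u - y) + t * ((1/2) * (norm (u - y))\<^sup>2) \<ge> 0"
    if t0: "0 < t" and t1: "t \<le> 1" for t
  proof -
    define w where "w = (1 - t) *\<^sub>R y + t *\<^sub>R u"
    have cC: "convex C" using cvx by (simp add: convex_on_def)
    have wC: "w \<in> C" unfolding w_def using cC yC u t0 t1 by (simp add: convex_alt)
    have hw: "h w \<le> (1 - t) * h y + t * h u"
      unfolding w_def using convex_onD[OF cvx, of t y u] t0 t1 yC u by simp
    have m: "lam * h y + (1/2) * (norm (y - a))\<^sup>2 \<le> lam * h w + (1/2) * (norm (w - a))\<^sup>2"
      using mini wC by (simp add: is_minimizer_on_def)
    have wa: "w - a = (y - a) + t *\<^sub>R (u - y)" unfolding w_def by (simp add: algebra_simps)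
    have nw: "(norm (w - a))\<^sup>2 = (norm (y - a))\<^sup>2 + 2 * t * inner (y - a) (u - y) + t\<^sup>2 * (norm (u - y))\<^sup>2"
      unfolding wa sq_expand by (simp add: power_mult_distrib)
    have "lam * h w \<le> lam * ((1 - t) * h y + t * h u)" using hw lam by (rule mult_left_mono)
    hence "0 \<le> t * (lam * (h u - h y) + inner (y - a) (u - y) + t * ((1/2) * (norm (u - y))\<^sup>2))"
      using m nw by (simp add: algebra_simps power2_eq_square)
    thus ?thesis using t0 by (simp add: zero_le_mult_iff)
  qed
  have Q: "lam * (h u - h y) + inner (y - a) (u - y) \<ge> 0"
    by (rule nonneg_from_small[of "(1/2) * (norm (u - y))\<^sup>2"]) (use key in \<open>auto simp: algebra_simps\<close>)
  have "u - a = (u - y) + (y - a)" by simp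
  hence "(norm (u - a))\<^sup>2 = (norm (u - y))\<^sup>2 + 2 * inner (u - y) (y - a) + (norm (y - a))\<^sup>2"
    by (metis sq_expand)
  thus ?thesis using Q by (simp add: inner_commute algebra_simps)
qed

lemma conv_quasi_fejer:
  fixes a e :: "nat \<Rightarrow> real"
  assumes a0: "\<forall>k. a k \<ge> 0" and e0: "\<forall>k. e k \<ge> 0" and es: "summable e"
    and step: "\<forall>k. a (Suc k) \<le> a k + e k"
  shows "convergent a"
proof -
  define b where "b k = a k - (\<Sum>i<k. e i)" for k
  have dec: "decseq b" unfolding b_def
    by (rule decseq_SucI) (use step in \<open>simp add: algebra_simps\<close>; smt (verit) step)
  have lb: "b k \<ge> - suminf e" for k
  proof -
    have "sum e {..<k} \<le> suminf e" using sum_le_suminf[OF es, of "{..<k}"] e0 by simp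
    thus ?thesis unfolding b_def using a0[rule_format, of k] by linarith
  qed
  have "convergent b"
    using decseq_convergent[OF dec, of "- suminf e"] lb convergent_def by blast
  hence cb: "b \<longlonglongrightarrow> lim b" by (simp add: convergent_LIMSEQ_iff)
  have "(\<lambda>k. b k + (\<Sum>i<k. e i)) \<longlonglongrightarrow> lim b + suminf e"
    by (intro tendsto_add cb summable_LIMSEQ es)
  thus ?thesis unfolding b_def convergent_def by auto
qed

theorem proposition3p1:
  fixes C :: "'a::{real_inner, complete_space} set"
    and T :: "'a \<Rightarrow> 'a"
    and f1 f2 :: "'a \<Rightarrow> 'a \<Rightarrow> real"
    and x y z g1 g2 :: "nat \<Rightarrow> 'a"
    and \<beta> :: "nat \<Rightarrow> real" and \<gamma> :: real
  assumes C_ne: "C \<noteq> {}" and C_closed: "closed C" and C_convex: "convex C"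
    and T_maps: "T ` C \<subseteq> C" and T_nonexp: "nonexpansive_on C T"
    and f1_diag: "\<forall>u\<in>C. f1 u u = 0" and f2_diag: "\<forall>u\<in>C. f2 u u = 0"
    and A1_conv: "\<forall>u\<in>C. \<exists>U. open U \<and> C \<subseteq> U \<and>
                     convex_on U (f1 u) \<and> convex_on U (f2 u) \<and>
                     (\<forall>v\<in>U. subdifferential (f1 u) v \<noteq> {} \<and> subdifferential (f2 u) v \<noteq> {})"
    and A1_usc: "\<forall>u\<in>C. weakly_usc_on C (\<lambda>v. f1 v u + f2 v u)"
    and A2: "pseudo_monotone_on C (\<lambda>u v. f1 u v + f2 u v)"
    and A3: "interior C \<noteq> {} \<or>
             (\<forall>u\<in>C. (\<exists>v\<in>C. isCont (f1 u) v) \<and> (\<exists>v\<in>C. isCont (f2 u) v))"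
    and Omega_ne: "Sol C (\<lambda>u v. f1 u v + f2 u v) \<inter> Fix T \<inter> C \<noteq> {}"
    and x0: "x 0 \<in> C"
    and gamma: "0 < \<gamma>" "\<gamma> < 1"
    and beta_pos: "\<forall>k. \<beta> k > 0"
    and beta_div: "\<not> summable \<beta>"
    and beta_sq: "summable (\<lambda>k. (\<beta> k)\<^sup>2)"
    and g1: "\<forall>k. g1 k \<in> subdifferential (f1 (x k)) (x k)"
    and g2: "\<forall>k. g2 k \<in> subdifferential (f2 (x k)) (x k)"
    and y_def: "\<forall>k. is_minimizer_on
              (\<lambda>v. (\<beta> k / max (\<beta> k) (max (norm (g1 k)) (norm (g2 k)))) * f1 (x k) v
                    + (1/2) * (norm (v - x k))\<^sup>2) C (y k)"
    and z_def: "\<forall>k. is_minimizer_on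
              (\<lambda>v. (\<beta> k / max (\<beta> k) (max (norm (g1 k)) (norm (g2 k)))) * f2 (x k) v
                    + (1/2) * (norm (v - y k))\<^sup>2) C (z k)"
    and x_step: "\<forall>k. x (Suc k) = \<gamma> *\<^sub>R z k + (1 - \<gamma>) *\<^sub>R T (x k)"
  shows "\<forall>xs \<in> Sol C (\<lambda>u v. f1 u v + f2 u v) \<inter> Fix T.
           convergent (\<lambda>k. norm (x k - xs))"
proof
  fix xs assume xsO: "xs \<in> Sol C (\<lambda>u v. f1 u v + f2 u v) \<inter> Fix T"
  have xsC: "xs \<in> C" and Txs: "T xs = xs" and solxs: "\<forall>v\<in>C. f1 xs v + f2 xs v \<ge> 0"
    using xsO by (auto simp: Sol_def Fix_def)
  have zC: "z k \<in> C" for k using z_def by (simp add: is_minimizer_on_def)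
  have yC: "y k \<in> C" for k using y_def by (simp add: is_minimizer_on_def)
  have xC: "x k \<in> C" for k
  proof (induction k)
    case 0 then show ?case using x0 by simp
  next
    case (Suc k)
    have "T (x k) \<in> C" using T_maps Suc by auto
    then show ?case using x_step convexD[OF C_convex zC[of k] \<open>T (x k) \<in> C\<close>, of \<gamma> "1 - \<gamma>"] gamma
      by simp
  qed
  define N where "N k = norm (x k - xs)" for k
  have est: "(N (Suc k))\<^sup>2 \<le> (N k)\<^sup>2 + 5 * (\<beta> k)\<^sup>2" for k
  proof -
    define eta where "eta = max (\<beta> k) (max (norm (g1 k)) (norm (g2 k)))"
    define lam where "lam = \<beta> k / eta"
    have bp: "\<beta> k > 0" using beta_pos by simp
    have etap: "eta > 0" using bp by (simp add: eta_def)
    have lam0: "lam \<ge> 0" using bp etap by (simp add: lam_def)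
    have lg1: "lam * norm (g1 k) \<le> \<beta> k"
    proof -
      have "norm (g1 k) / eta \<le> 1" using etap by (simp add: eta_def)
      hence "\<beta> k * (norm (g1 k) / eta) \<le> \<beta> k * 1" using bp by (intro mult_left_mono) auto
      thus ?thesis by (simp add: lam_def)
    qed
    have lg2: "lam * norm (g2 k) \<le> \<beta> k"
    proof -
      have "norm (g2 k) / eta \<le> 1" using etap by (simp add: eta_def)
      hence "\<beta> k * (norm (g2 k) / eta) \<le> \<beta> k * 1" using bp by (intro mult_left_mono) auto
      thus ?thesis by (simp add: lam_def)
    qed
    obtain U where U: "open U" "C \<subseteq> U" "convex_on U (f1 (x k))" "convex_on U (f2 (x k))"
      using A1_conv xC[of k] by blast
    have cv1: "convex_on C (f1 (x k))" using convex_on_subset[OF U(3) U(2) C_convex] .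
    have cv2: "convex_on C (f2 (x k))" using convex_on_subset[OF U(4) U(2) C_convex] .
    have ym: "is_minimizer_on (\<lambda>v. lam * f1 (x k) v + (1/2) * (norm (v - x k))\<^sup>2) C (y k)"
      using y_def by (simp add: lam_def eta_def)
    have zm: "is_minimizer_on (\<lambda>v. lam * f2 (x k) v + (1/2) * (norm (v - y k))\<^sup>2) C (z k)"
      using z_def by (simp add: lam_def eta_def)
    have P1: "(norm (xs - y k))\<^sup>2 \<le> (norm (xs - x k))\<^sup>2 - (norm (y k - x k))\<^sup>2
               + 2 * lam * (f1 (x k) xs - f1 (x k) (y k))"
      by (rule prox_ineq[OF cv1 ym lam0 xsC])
    have P2: "(norm (xs - z k))\<^sup>2 \<le> (norm (xs - y k))\<^sup>2 - (norm (z k - y k))\<^sup>2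
               + 2 * lam * (f2 (x k) xs - f2 (x k) (z k))"
      by (rule prox_ineq[OF cv2 zm lam0 xsC])
    define A where "A = norm (y k - x k)"
    define B where "B = norm (z k - y k)"
    define D where "D = norm (z k - x k)"
    have DAB: "D \<le> A + B" unfolding A_def B_def D_def
      using norm_triangle_ineq[of "z k - y k" "y k - x k"] by simp
    have A0: "A \<ge> 0" and B0: "B \<ge> 0" by (simp_all add: A_def B_def)
    have s1: "f1 (x k) (y k) \<ge> - (norm (g1 k) * A)"
    proof -
      have "f1 (x k) (y k) \<ge> f1 (x k) (x k) + inner (g1 k) (y k - x k)"
        using g1 by (simp add: subdifferential_def)
      moreover have "f1 (x k) (x k) = 0" using f1_diag xC by simp
      moreover have "inner (- g1 k) (y k - x k) \<le> norm (g1 k) * A"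
        using norm_cauchy_schwarz[of "- g1 k" "y k - x k"] by (simp add: A_def)
      ultimately show ?thesis by simp
    qed
    have s2: "f2 (x k) (z k) \<ge> - (norm (g2 k) * D)"
    proof -
      have "f2 (x k) (z k) \<ge> f2 (x k) (x k) + inner (g2 k) (z k - x k)"
        using g2 by (simp add: subdifferential_def)
      moreover have "f2 (x k) (x k) = 0" using f2_diag xC by simp
      moreover have "inner (- g2 k) (z k - x k) \<le> norm (g2 k) * D"
        using norm_cauchy_schwarz[of "- g2 k" "z k - x k"] by (simp add: D_def)
      ultimately show ?thesis by simp
    qed
    have t1: "- (lam * f1 (x k) (y k)) \<le> \<beta> k * A"
    proof -
      have "- (lam * f1 (x k) (y k)) \<le> lam * (norm (g1 k) * A)"
        using mult_left_mono[OF s1 lam0] by simp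
      also have "\<dots> \<le> \<beta> k * A" using mult_right_mono[OF lg1 A0] by (simp add: mult.assoc)
      finally show ?thesis .
    qed
    have t2: "- (lam * f2 (x k) (z k)) \<le> \<beta> k * (A + B)"
    proof -
      have "- (lam * f2 (x k) (z k)) \<le> lam * (norm (g2 k) * D)"
        using mult_left_mono[OF s2 lam0] by simp
      also have "\<dots> \<le> \<beta> k * D" using mult_right_mono[OF lg2, of D] by (simp add: mult.assoc D_def)
      also have "\<dots> \<le> \<beta> k * (A + B)" using DAB bp by simp
      finally show ?thesis .
    qed
    have fneg: "f1 (x k) xs + f2 (x k) xs \<le> 0"
      using A2 xsC xC[of k] solxs unfolding pseudo_monotone_on_def by blast
    have t3: "lam * (f1 (x k) xs + f2 (x k) xs) \<le> 0"
      using mult_left_mono[OF fneg lam0] by simp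
    have sq: "0 \<le> (A - 2 * \<beta> k)\<^sup>2 + (B - \<beta> k)\<^sup>2" by simp
    have Z: "(norm (z k - xs))\<^sup>2 \<le> (N k)\<^sup>2 + 5 * (\<beta> k)\<^sup>2"
    proof -
      have "(norm (xs - z k))\<^sup>2 \<le> (norm (xs - x k))\<^sup>2 - A\<^sup>2 - B\<^sup>2
              + 2 * lam * (f1 (x k) xs + f2 (x k) xs) - 2 * (lam * f1 (x k) (y k))
              - 2 * (lam * f2 (x k) (z k))"
        using P1 P2 unfolding A_def B_def by (simp add: algebra_simps)
      also have "\<dots> \<le> (norm (xs - x k))\<^sup>2 - A\<^sup>2 - B\<^sup>2 + 2 * (\<beta> k * A) + 2 * (\<beta> k * (A + B))"
        using t1 t2 t3 by linarith
      also have "\<dots> \<le> (norm (xs - x k))\<^sup>2 + 5 * (\<beta> k)\<^sup>2"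
        using sq by (simp add: power2_eq_square algebra_simps)
      finally show ?thesis by (simp add: N_def norm_minus_commute)
    qed
    have "x (Suc k) - xs = \<gamma> *\<^sub>R (z k - xs) + (1 - \<gamma>) *\<^sub>R (T (x k) - T xs)"
      using x_step Txs by (simp add: algebra_simps)
    hence "N (Suc k) \<le> \<gamma> * norm (z k - xs) + (1 - \<gamma>) * norm (T (x k) - T xs)"
      unfolding N_def using norm_triangle_ineq[of "\<gamma> *\<^sub>R (z k - xs)" "(1 - \<gamma>) *\<^sub>R (T (x k) - T xs)"] gamma
      by simp
    also have "\<dots> \<le> \<gamma> * norm (z k - xs) + (1 - \<gamma>) * N k"
      using T_nonexp xC[of k] xsC gamma unfolding nonexpansive_on_def N_def
      by (intro add_left_mono mult_left_mono) auto
    finally have n1: "N (Suc k) \<le> \<gamma> * norm (z k - xs) + (1 - \<gamma>) * N k" .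
    define a where "a = norm (z k - xs)"
    define b where "b = N k"
    have "(N (Suc k))\<^sup>2 \<le> (\<gamma> * a + (1 - \<gamma>) * b)\<^sup>2"
      using n1 by (intro power_mono) (auto simp: N_def a_def b_def)
    also have "\<dots> = \<gamma> * a\<^sup>2 + (1 - \<gamma>) * b\<^sup>2 - \<gamma> * (1 - \<gamma>) * (a - b)\<^sup>2"
      by (simp add: power2_eq_square algebra_simps)
    also have "\<dots> \<le> \<gamma> * a\<^sup>2 + (1 - \<gamma>) * b\<^sup>2"
      using gamma by simp
    also have "\<dots> \<le> \<gamma> * (b\<^sup>2 + 5 * (\<beta> k)\<^sup>2) + (1 - \<gamma>) * b\<^sup>2"
      using Z gamma by (simp add: a_def b_def)
    also have "\<dots> \<le> b\<^sup>2 + 5 * (\<beta> k)\<^sup>2"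
      using gamma mult_right_mono[of \<gamma> 1 "(\<beta> k)\<^sup>2"] by (simp add: algebra_simps)
    finally show ?thesis by (simp add: b_def)
  qed
  have "convergent (\<lambda>k. (N k)\<^sup>2)"
    by (rule conv_quasi_fejer[of _ "\<lambda>k. 5 * (\<beta> k)\<^sup>2"]) (use est beta_sq in \<open>auto intro: summable_mult\<close>)
  then obtain L where "(\<lambda>k. (N k)\<^sup>2) \<longlonglongrightarrow> L" by (auto simp: convergent_def)
  hence "(\<lambda>k. sqrt ((N k)\<^sup>2)) \<longlonglongrightarrow> sqrt L" by (rule tendsto_real_sqrt)
  hence "(\<lambda>k. norm (x k - xs)) \<longlonglongrightarrow> sqrt L" by (simp add: N_def)
  thus "convergent (\<lambda>k. norm (x k - xs))" unfolding convergent_def by auto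
qed

end
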